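(* Let $n,k,r$ be integers with $k,r\geq 2$ and $n\geq k+r$, and let $H$ be a vertex-$k$-maximal $r$-uniform hypergraph on $n$ vertices with a separation triple $(S,H_1,H_2)$. Let $e$ be an $r$-subset of $V(H_1)$ or of $V(H_2)$ with $e\notin E(H)$. Then every subhypergraph $H'$ of $H+e$ with $\kappa(H')\geq k+1$ satisfies $V(H')\subseteq V(H_1)$ or $V(H')\subseteq V(H_2)$; i.e. $H'$ is a subhypergraph of $H_1+e$ or of $H_2+e$ (where $H_i+e$ is $H_i$ with $e$ added whenever $e\subseteq V(H_i)$). Moreover, if for some $i\in\{1,2\}$ we have $e\subseteq V(H_i)$ and $e\not\subseteq S$, then $H'$ is a subhypergraph of $H_i+e$.
   Context: A hypergraph $H=(V,E)$ consists of a finite vertex set $V$ and a set $E$ of non-empty subsets of $V$ (edges). $H$ is $r$-uniform if every edge has exactly $r$ elements. The complement $H^c$ of an $r$-uniform hypergraph $H=(V,E)$ is the $r$-uniform hypergraph on $V$ whose edges are the $r$-subsets of $V$ not in $E$. A subhypergraph of $H$ is $H'=(V',E')$ with $V'\subseteq V$, $E'\subseteq E$. For an $r$-subset $e\in E(H^c)$, $H+e=(V,E\cup\{e\})$. For $Y\subseteq V$, $H[Y]$ is the induced hypergraph with vertex set $Y$ and edges $\{e\in E: e\subseteq Y\}$, and $H-Y=H[V\setminus Y]$. A path is an alternating sequence $v_1,e_1,\dots,e_s,v_{s+1}$ of distinct vertices and distinct edges with $v_i,v_{i+1}\in e_i$; connectedness and components are defined via paths. A vertex-cut is a set $X\subseteq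 V$ with $H-X$ disconnected. The vertex-connectivity $\kappa(H)$ is the minimum size of a vertex-cut if one exists, and $|V(H)|-1$ otherwise. $\overline{\kappa}(H)=\max\{\kappa(H'): H'\text{ a subhypergraph of }H\}$. An $r$-uniform hypergraph $H$ is vertex-$k$-maximal if $\overline{\kappa}(H)\leq k$ but $\overline{\kappa}(H+e)\geq k+1$ for every $e\in E(H^c)$. For a vertex-$k$-maximal $r$-uniform $H$ with $|V(H)|\geq k+r$ (so $\kappa(H)=k$ and $H$ has vertex-cuts), a separation triple $(S,H_1,H_2)$ is obtained by taking a minimum vertex-cut $S$ (so $|S|=k$), a component $C_1$ of $H-S$, letting $C_2=H-(S\cup V(C_1))$, $H_1=H[S\cup V(C_1)]$ and $H_2=H[S\cup V(C_2)]$. *)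

theory Defs
  imports Main
begin

type_synonym 'a hypergraph = "'a set \<times> 'a set set"

definition verts :: "'a hypergraph \<Rightarrow> 'a set" where "verts H = fst H"
definition edges :: "'a hypergraph \<Rightarrow> 'a set set" where "edges H = snd H"

definition hypergraph :: "'a hypergraph \<Rightarrow> bool" where
  "hypergraph H \<longleftrightarrow> finite (verts H) \<and> (\<forall>e\<in>edges H. e \<noteq> {} \<and> e \<subseteq> verts H)"

definition uniform :: "nat \<Rightarrow> 'a hypergraph \<Rightarrow> bool" where
  "uniform r H \<longleftrightarrow> hypergraph H \<and> (\<forall>e\<in>edges H. card e = r)"

definition co_edges :: "nat \<Rightarrow> 'a hypergraph \<Rightarrow> 'a set set" where
  "co_edges r H = {e. e \<subseteq> verts H \<and> card e = r \<and> e \<notin> edges H}"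

definition add_edge :: "'a hypergraph \<Rightarrow> 'a set \<Rightarrow> 'a hypergraph" where
  "add_edge H e = (verts H, insert e (edges H))"

definition add_edge_if :: "'a hypergraph \<Rightarrow> 'a set \<Rightarrow> 'a hypergraph" where
  "add_edge_if H e = (if e \<subseteq> verts H then add_edge H e else H)"

definition subhypergraph :: "'a hypergraph \<Rightarrow> 'a hypergraph \<Rightarrow> bool" where
  "subhypergraph H' H \<longleftrightarrow> hypergraph H' \<and> verts H' \<subseteq> verts H \<and> edges H' \<subseteq> edges H"

definition induced :: "'a hypergraph \<Rightarrow> 'a set \<Rightarrow> 'a hypergraph" where
  "induced H Y = (Y, {e\<in>edges H. e \<subseteq> Y})"

definition delete :: "'a hypergraph \<Rightarrow> 'a set \<Rightarrow> 'a hypergraph" where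
  "delete H Y = induced H (verts H - Y)"

definition is_path :: "'a hypergraph \<Rightarrow> 'a list \<Rightarrow> 'a set list \<Rightarrow> bool" where
  "is_path H vs es \<longleftrightarrow> length vs = Suc (length es) \<and> distinct vs \<and> distinct es
     \<and> set vs \<subseteq> verts H \<and> set es \<subseteq> edges H
     \<and> (\<forall>i < length es. vs ! i \<in> es ! i \<and> vs ! Suc i \<in> es ! i)"

definition joined :: "'a hypergraph \<Rightarrow> 'a \<Rightarrow> 'a \<Rightarrow> bool" where
  "joined H u v \<longleftrightarrow> (\<exists>vs es. is_path H vs es \<and> hd vs = u \<and> last vs = v)"

definition connected :: "'a hypergraph \<Rightarrow> bool" where
  "connected H \<longleftrightarrow> (\<forall>u\<in>verts H. \<forall>v\<in>verts H. joined H u v)"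

definition vertex_cut :: "'a hypergraph \<Rightarrow> 'a set \<Rightarrow> bool" where
  "vertex_cut H X \<longleftrightarrow> X \<subseteq> verts H \<and> \<not> connected (delete H X)"

definition kappa :: "'a hypergraph \<Rightarrow> nat" where
  "kappa H = (if \<exists>X. vertex_cut H X then Min {card X | X. vertex_cut H X}
              else card (verts H) - 1)"

definition kappa_bar :: "'a hypergraph \<Rightarrow> nat" where
  "kappa_bar H = Max {kappa H' | H'. subhypergraph H' H}"

definition vertex_k_maximal :: "nat \<Rightarrow> nat \<Rightarrow> 'a hypergraph \<Rightarrow> bool" where
  "vertex_k_maximal k r H \<longleftrightarrow> uniform r H \<and> kappa_bar H \<le> k
     \<and> (\<forall>e\<in>co_edges r H. kappa_bar (add_edge H e) \<ge> k + 1)"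

definition component_verts :: "'a hypergraph \<Rightarrow> 'a set \<Rightarrow> bool" where
  "component_verts H C \<longleftrightarrow> (\<exists>v\<in>verts H. C = {u\<in>verts H. joined H v u})"

definition min_vertex_cut :: "'a hypergraph \<Rightarrow> 'a set \<Rightarrow> bool" where
  "min_vertex_cut H S \<longleftrightarrow> vertex_cut H S \<and> (\<forall>X. vertex_cut H X \<longrightarrow> card S \<le> card X)"

definition separation_triple ::
  "'a hypergraph \<Rightarrow> 'a set \<Rightarrow> 'a hypergraph \<Rightarrow> 'a hypergraph \<Rightarrow> bool" where
  "separation_triple H S H1 H2 \<longleftrightarrow> min_vertex_cut H S \<and>
     (\<exists>C1. component_verts (delete H S) C1 \<and>
        H1 = induced H (S \<union> C1) \<and>
        H2 = induced H (S \<union> (verts H - (S \<union> C1))))"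

end

theory Submission
  imports Defs
begin

lemma path_prefix:
  assumes "is_path G vs es" "m < length vs"
  shows "is_path G (take (Suc m) vs) (take m es)"
  using assms unfolding is_path_def
  by (auto dest: in_set_takeD)

lemma path_extend:
  assumes p: "is_path G vs es" and i: "i < length vs" and f: "f \<in> edges G"
    and vi: "vs ! i \<in> f" and y: "y \<in> f" "y \<in> verts G" "y \<notin> set vs"
    and fn: "f \<notin> set (take i es)"
  shows "is_path G (take (Suc i) vs @ [y]) (take i es @ [f])"
proof -
  have len: "length vs = Suc (length es)" using p by (simp add: is_path_def)
  have "is_path G (take (Suc i) vs) (take i es)" using path_prefix[OF p i] .
  then show ?thesis using p i f vi y fn len unfolding is_path_def
    apply (auto simp: nth_append min_def dest: in_set_takeD)
    apply (subgoal_tac "ia = i", simp, linarith)+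
    done
qed

lemma joined_edge:
  assumes p: "is_path G vs es" and x: "x \<in> set vs" and f: "f \<in> edges G" "x \<in> f"
    and y: "y \<in> f" "y \<in> verts G"
  shows "joined G (hd vs) y"
proof -
  have len: "length vs = Suc (length es)" and dv: "distinct vs" and de: "distinct es"
    and adj: "\<forall>i < length es. vs ! i \<in> es ! i \<and> vs ! Suc i \<in> es ! i"
    using p by (auto simp: is_path_def)
  have ne: "vs \<noteq> []" using len by auto
  show ?thesis
  proof (cases "y \<in> set vs")
    case True
    then obtain m where m: "m < length vs" "vs ! m = y" by (auto simp: in_set_conv_nth)
    have "is_path G (take (Suc m) vs) (take m es)" using path_prefix[OF p m(1)] .
    moreover have "hd (take (Suc m) vs) = hd vs" using ne by (cases vs) auto
    moreover have "last (take (Suc m) vs) = y" using m by (simp add: take_Suc_conv_app_nth)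
    ultimately show ?thesis unfolding joined_def by blast
  next
    case yn: False
    have "\<exists>j < length vs. vs ! j \<in> f \<and> f \<notin> set (take j es)"
    proof (cases "f \<in> set es")
      case True
      then obtain j where j: "j < length es" "es ! j = f" by (auto simp: in_set_conv_nth)
      have "f \<notin> set (take j es)"
      proof
        assume "f \<in> set (take j es)"
        then obtain j' where "j' < j" "es ! j' = f" using j
          by (auto simp: in_set_conv_nth)
        with j de show False using nth_eq_iff_index_eq[of es j' j] by simp
      qed
      then show ?thesis using j adj len by (intro exI[of _ j]) auto
    next
      case False
      obtain i where "i < length vs" "vs ! i = x" using x by (auto simp: in_set_conv_nth)
      then show ?thesis using False f by (intro exI[of _ i]) (auto dest: in_set_takeD)
    qed
    then obtain j where j: "j < length vs" "vs ! j \<in> f" "f \<notin> set (take j es)" by blast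
    have "is_path G (take (Suc j) vs @ [y]) (take j es @ [f])"
      using path_extend[OF p j(1) f(1) j(2) y yn j(3)] .
    moreover have "hd (take (Suc j) vs @ [y]) = hd vs" using ne by (cases vs) auto
    ultimately show ?thesis unfolding joined_def by fastforce
  qed
qed

lemma path_stays:
  assumes p: "is_path G vs es" and A: "\<forall>f\<in>edges G. f \<subseteq> A \<or> f \<inter> A = {}"
    and h: "hd vs \<in> A"
  shows "last vs \<in> A"
proof -
  have len: "length vs = Suc (length es)" and sub: "set es \<subseteq> edges G"
    and adj: "\<forall>i < length es. vs ! i \<in> es ! i \<and> vs ! Suc i \<in> es ! i"
    using p by (auto simp: is_path_def)
  have "\<forall>i. i < length vs \<longrightarrow> vs ! i \<in> A"
  proof
    fix i show "i < length vs \<longrightarrow> vs ! i \<in> A"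
    proof (induction i)
      case 0 then show ?case using h by (cases vs) auto
    next
      case (Suc i)
      show ?case
      proof
        assume "Suc i < length vs"
        then have i: "i < length es" using len by simp
        have "es ! i \<in> edges G" using i sub by auto
        moreover have "vs ! i \<in> A" using Suc i len by simp
        ultimately have "es ! i \<subseteq> A" using A adj i by blast
        then show "vs ! Suc i \<in> A" using adj i by blast
      qed
    qed
  qed
  then have "vs ! length es \<in> A" using len by simp
  moreover have "vs \<noteq> []" using len by auto
  ultimately show ?thesis using len by (simp add: last_conv_nth)
qed

lemma finite_cuts:
  assumes "hypergraph G"
  shows "finite {card X | X. vertex_cut G X}"
proof -
  have "{card X | X. vertex_cut G X} \<subseteq> card ` Pow (verts G)"
    by (auto simp: vertex_cut_def)
  moreover have "finite (verts G)" using assms by (simp add: hypergraph_def)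
  ultimately show ?thesis by (meson finite_Pow_iff finite_imageI finite_subset)
qed

lemma kappa_le_cut:
  assumes "hypergraph G" "vertex_cut G X"
  shows "kappa G \<le> card X"
proof -
  have "kappa G = Min {card X | X. vertex_cut G X}" using assms by (auto simp: kappa_def)
  also have "\<dots> \<le> card X" using finite_cuts[OF assms(1)] assms(2) by (intro Min_le) auto
  finally show ?thesis .
qed

lemma kappa_le_card:
  assumes "hypergraph G"
  shows "kappa G \<le> card (verts G)"
proof (cases "\<exists>X. vertex_cut G X")
  case True
  then obtain X where X: "vertex_cut G X" by blast
  have "kappa G \<le> card X" using kappa_le_cut[OF assms X] .
  also have "\<dots> \<le> card (verts G)" using X assms
    by (intro card_mono) (auto simp: vertex_cut_def hypergraph_def)
  finally show ?thesis .
next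
  case False
  then show ?thesis by (simp add: kappa_def)
qed

lemma kappa_le_kbar:
  assumes "hypergraph H" "subhypergraph G H"
  shows "kappa G \<le> kappa_bar H"
proof -
  have fin: "finite (verts H)" using assms by (simp add: hypergraph_def)
  have "{kappa H' | H'. subhypergraph H' H} \<subseteq> {..card (verts H)}"
  proof
    fix x assume "x \<in> {kappa H' | H'. subhypergraph H' H}"
    then obtain H' where H': "x = kappa H'" "subhypergraph H' H" by blast
    have "kappa H' \<le> card (verts H')" using H' by (intro kappa_le_card) (simp add: subhypergraph_def)
    also have "\<dots> \<le> card (verts H)" using H' fin by (intro card_mono) (auto simp: subhypergraph_def)
    finally show "x \<in> {..card (verts H)}" using H' by simp
  qed
  then have "finite {kappa H' | H'. subhypergraph H' H}" using finite_subset by blast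
  moreover have "kappa G \<in> {kappa H' | H'. subhypergraph H' H}" using assms(2) by blast
  ultimately show ?thesis unfolding kappa_bar_def by (rule Max_ge)
qed

lemma sub_induced:
  assumes "subhypergraph H' (add_edge H e)" "verts H' \<subseteq> Y" "e \<in> edges H'"
  shows "subhypergraph H' (add_edge_if (induced H Y) e)"
proof -
  have hy: "hypergraph H'" using assms(1) by (simp add: subhypergraph_def)
  have eY: "e \<subseteq> Y" using hy assms(2,3) by (auto simp: hypergraph_def)
  have "edges H' \<subseteq> insert e (edges H)" using assms(1)
    by (simp add: subhypergraph_def add_edge_def edges_def)
  moreover have "\<forall>f\<in>edges H'. f \<subseteq> Y" using hy assms(2) by (auto simp: hypergraph_def)
  ultimately show ?thesis using hy assms(2) eY
    by (auto simp: subhypergraph_def add_edge_if_def add_edge_def induced_def verts_def edges_def)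
qed

lemma vdel: "verts (delete G Y) = verts G - Y"
  by (simp add: delete_def induced_def verts_def)
lemma edel: "edges (delete G Y) = {f \<in> edges G. f \<subseteq> verts G - Y}"
  by (simp add: delete_def induced_def verts_def edges_def)
lemma vind: "verts (induced G Y) = Y" by (simp add: induced_def verts_def)

theorem lemma2p2:
  fixes n k r :: nat and H H1 H2 :: "'a hypergraph" and S e :: "'a set"
  assumes "k \<ge> 2" and "r \<ge> 2" and "n \<ge> k + r"
    and "card (verts H) = n"
    and "vertex_k_maximal k r H"
    and "separation_triple H S H1 H2"
    and "e \<subseteq> verts H1 \<or> e \<subseteq> verts H2" and "card e = r" and "e \<notin> edges H"
  shows "\<forall>H'. subhypergraph H' (add_edge H e) \<and> kappa H' \<ge> k + 1 \<longrightarrow>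
           (verts H' \<subseteq> verts H1 \<or> verts H' \<subseteq> verts H2)
         \<and> (subhypergraph H' (add_edge_if H1 e) \<or> subhypergraph H' (add_edge_if H2 e))
         \<and> (e \<subseteq> verts H1 \<and> \<not> e \<subseteq> S \<longrightarrow> subhypergraph H' (add_edge_if H1 e))
         \<and> (e \<subseteq> verts H2 \<and> \<not> e \<subseteq> S \<longrightarrow> subhypergraph H' (add_edge_if H2 e))"
proof -
  have hypH: "hypergraph H" and kbar: "kappa_bar H \<le> k"
    using assms(5) by (auto simp: vertex_k_maximal_def uniform_def)
  have finH: "finite (verts H)" using hypH by (simp add: hypergraph_def)
  have mc: "min_vertex_cut H S" using assms(6) by (simp add: separation_triple_def)
  obtain C1 where comp: "component_verts (delete H S) C1"
    and H1: "H1 = induced H (S \<union> C1)"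
    and H2: "H2 = induced H (S \<union> (verts H - (S \<union> C1)))"
    using assms(6) by (auto simp: separation_triple_def)
  obtain v where v: "v \<in> verts H - S"
    and C1: "C1 = {u \<in> verts H - S. joined (delete H S) v u}"
    using comp by (auto simp: component_verts_def vdel)
  have Sv: "S \<subseteq> verts H" using mc by (simp add: min_vertex_cut_def vertex_cut_def)
  have finS: "finite S" using Sv finH finite_subset by blast
  have vH1: "verts H1 = S \<union> C1" and vH2: "verts H2 = S \<union> (verts H - (S \<union> C1))"
    unfolding H1 H2 vind by auto
  have C1S: "C1 \<inter> S = {}" using C1 by auto
  have cutH: "vertex_cut H S" using mc by (simp add: min_vertex_cut_def)
  have "kappa H = card S"
  proof -
    have "kappa H = Min {card X | X. vertex_cut H X}" using cutH by (auto simp: kappa_def)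
    also have "\<dots> = card S"
      using finite_cuts[OF hypH] cutH mc by (intro Min_eqI) (auto simp: min_vertex_cut_def)
    finally show ?thesis .
  qed
  moreover have "kappa H \<le> kappa_bar H"
    using hypH by (intro kappa_le_kbar) (auto simp: subhypergraph_def)
  ultimately have cardS: "card S \<le> k" using kbar by simp
  have clos: "\<forall>f\<in>edges H. f \<inter> S = {} \<longrightarrow> f \<subseteq> C1 \<or> f \<inter> C1 = {}"
  proof (intro ballI impI)
    fix f assume f: "f \<in> edges H" "f \<inter> S = {}"
    show "f \<subseteq> C1 \<or> f \<inter> C1 = {}"
    proof (cases "f \<inter> C1 = {}")
      case False
      then obtain x where x: "x \<in> f" "x \<in> C1" by blast
      then have "joined (delete H S) v x" using C1 by simp
      then obtain vs es where p: "is_path (delete H S) vs es" "hd vs = v" "last vs = x"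
        by (auto simp: joined_def)
      have "vs \<noteq> []" using p(1) by (auto simp: is_path_def)
      then have xs: "x \<in> set vs" using p(3) by auto
      have fv: "f \<subseteq> verts H" using f hypH by (auto simp: hypergraph_def)
      have fe: "f \<in> edges (delete H S)" using f fv by (auto simp: edel)
      have "f \<subseteq> C1"
      proof
        fix y assume y: "y \<in> f"
        have yv: "y \<in> verts (delete H S)" using y fv f(2) by (auto simp: vdel)
        have "joined (delete H S) v y" using joined_edge[OF p(1) xs fe x(1) y yv] p(2) by simp
        then show "y \<in> C1" using C1 yv by (auto simp: vdel)
      qed
      then show ?thesis by blast
    qed simp
  qed
  show ?thesis
  proof (intro allI impI)
    fix H' assume asm: "subhypergraph H' (add_edge H e) \<and> kappa H' \<ge> k + 1"
    then have sub: "subhypergraph H' (add_edge H e)" and kH': "kappa H' \<ge> k + 1" by auto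
    have hyH': "hypergraph H'" using sub by (simp add: subhypergraph_def)
    have vH': "verts H' \<subseteq> verts H" and eH'': "edges H' \<subseteq> insert e (edges H)"
      using sub by (auto simp: subhypergraph_def add_edge_def verts_def edges_def)
    have eH': "e \<in> edges H'"
    proof (rule ccontr)
      assume "e \<notin> edges H'"
      then have "subhypergraph H' H" using hyH' vH' eH'' by (auto simp: subhypergraph_def)
      then have "kappa H' \<le> kappa_bar H" using kappa_le_kbar hypH by blast
      then show False using kbar kH' by simp
    qed
    have eV: "e \<subseteq> verts H'" using hyH' eH' by (auto simp: hypergraph_def)
    have part1: "verts H' \<subseteq> verts H1 \<or> verts H' \<subseteq> verts H2"
    proof (rule ccontr)
      assume "\<not> ?thesis"
      then obtain w u where w: "w \<in> verts H'" "w \<notin> S \<union> C1"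
        and u: "u \<in> verts H'" "u \<notin> S \<union> (verts H - (S \<union> C1))"
        using vH1 vH2 by blast
      have uC: "u \<in> C1" using u vH' by blast
      define X where "X = S \<inter> verts H'"
      have "\<not> connected (delete H' X)"
      proof
        assume "connected (delete H' X)"
        moreover have "u \<in> verts (delete H' X)" "w \<in> verts (delete H' X)"
          using u w X_def by (auto simp: vdel)
        ultimately obtain vs es where p: "is_path (delete H' X) vs es" "hd vs = u" "last vs = w"
          unfolding connected_def joined_def by blast
        have A: "\<forall>f\<in>edges (delete H' X). f \<subseteq> C1 \<or> f \<inter> C1 = {}"
        proof
          fix f assume "f \<in> edges (delete H' X)"
          then have f: "f \<in> edges H'" "f \<subseteq> verts H' - X" by (auto simp: edel)
          have fS: "f \<inter> S = {}" using f(2) X_def by auto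
          show "f \<subseteq> C1 \<or> f \<inter> C1 = {}"
          proof (cases "f = e")
            case True
            then show ?thesis using assms(7) vH1 vH2 fS C1S by blast
          next
            case False
            then show ?thesis using f(1) eH'' clos fS by blast
          qed
        qed
        have "w \<in> C1" using path_stays[OF p(1) A] p uC by simp
        then show False using w by simp
      qed
      then have "vertex_cut H' X" using X_def by (simp add: vertex_cut_def)
      then have "kappa H' \<le> card X" using kappa_le_cut hyH' by blast
      also have "\<dots> \<le> card S" using finS X_def by (intro card_mono) auto
      finally show False using cardS kH' by simp
    qed
    have HH1: "subhypergraph H' (add_edge_if H1 e)" if "verts H' \<subseteq> verts H1"
      using sub_induced[OF sub _ eH'] that H1 vH1 by simp
    have HH2: "subhypergraph H' (add_edge_if H2 e)" if "verts H' \<subseteq> verts H2"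
      using sub_induced[OF sub _ eH'] that H2 vH2 by simp
    have int: "verts H1 \<inter> verts H2 \<subseteq> S" using vH1 vH2 by auto
    show "(verts H' \<subseteq> verts H1 \<or> verts H' \<subseteq> verts H2)
         \<and> (subhypergraph H' (add_edge_if H1 e) \<or> subhypergraph H' (add_edge_if H2 e))
         \<and> (e \<subseteq> verts H1 \<and> \<not> e \<subseteq> S \<longrightarrow> subhypergraph H' (add_edge_if H1 e))
         \<and> (e \<subseteq> verts H2 \<and> \<not> e \<subseteq> S \<longrightarrow> subhypergraph H' (add_edge_if H2 e))"
      using part1 HH1 HH2 int eV by blast
  qed
qed

end
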